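(* Let $n>1$ and consider the undirected cycle $C_{2n}$ with vertices $v_1,\dots,v_n,w_1,\dots,w_n$, where $v_i$ is adjacent to $w_i$ and $w_{i-1}$ (indices of $w$ modulo $n$, so $v_1$ is adjacent to $w_1$ and $w_n$). Let $x_i,y_i\in[3]$ denote the hat colours of $v_i,w_i$, all arithmetic modulo $3$. Define guessing functions $f_i$ for $v_i$ and $g_i$ for $w_i$ by: for $i\ne1$, $f_i(y_{i-1},y_i)=y_i-1$ if $y_i\ne y_{i-1}+1$ and $f_i=y_i+1$ if $y_i=y_{i-1}+1$; $f_1(y_n,y_1)=y_1-1$ if $y_1\ne y_n-1$ and $f_1=y_1+1$ if $y_1=y_n-1$; for $i\ne n$, $g_i(x_i,x_{i+1})=x_i$ if $x_i\ne x_{i+1}+1$ and $g_i=x_i-1$ if $x_i=x_{i+1}+1$; $g_n(x_n,x_1)=x_n$ if $x_n\ne x_1$ and $g_n=x_n-1$ if $x_n=x_1$. Call a configuration $(x,y)\in[3]^n\times[3]^n$ bad if $f_i\ne x_i$ and $g_i\ne y_i$ for all $i$. Then: (a) if $n\equiv 0\pmod 3$ there is no bad configuration; in particular $C_{2n}$ is $3$-solvable; (b) if $n\equiv1\pmod3$ the bad configurations are exactly those with $x_i=y_i=a-(i-1)$ for all $i=1,\dots,n$, for some $a\in[3]$; (c) if $n\equiv2\pmod3$ the bad configurations are exactly those with $y_i=a+(i-1)$ and $x_i=a+(i-2)$ for all $i=1,\dots,n$, for some $a\in[3]$.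
   Context: An undirected graph is identified with the directed graph having both arcs for each edge; $N^-(v)$ is the set of neighbours of $v$. For $q\ge2$ let $[q]=\{0,\dots,q-1\}$. A $D$-function over $[q]$ is a map $f=(f_v)_{v\in V}:[q]^V\to[q]^V$ with each $f_v(x)$ depending only on $(x_u)_{u\in N^-(v)}$. $D$ is $q$-solvable if some $D$-function $f$ over $[q]$ has the property that for every $x\in[q]^V$ there is $v$ with $f_v(x)=x_v$. *)

theory Defs
  imports "HOL-Library.FuncSet"
begin

(* An undirected graph is given by its vertex set V and the
neighbourhood map N (N v = set of neighbours of v).*)

definition configs :: "'v set \<Rightarrow> nat \<Rightarrow> ('v \<Rightarrow> nat) set" where
  "configs V q = V \<rightarrow>\<^sub>E {..<q}"

definition is_D_function :: "'v set \<Rightarrow> ('v \<Rightarrow> 'v set) \<Rightarrow> nat \<Rightarrow> ('v \<Rightarrow> ('v \<Rightarrow> nat) \<Rightarrow> nat) \<Rightarrow> bool" where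
  "is_D_function V N q f \<longleftrightarrow>
     (\<forall>v\<in>V. \<forall>x\<in>configs V q. f v x < q) \<and>
     (\<forall>v\<in>V. \<forall>x\<in>configs V q. \<forall>x'\<in>configs V q.
        (\<forall>u\<in>N v. x u = x' u) \<longrightarrow> f v x = f v x')"

definition q_solvable :: "'v set \<Rightarrow> ('v \<Rightarrow> 'v set) \<Rightarrow> nat \<Rightarrow> bool" where
  "q_solvable V N q \<longleftrightarrow>
     (\<exists>f. is_D_function V N q f \<and> (\<forall>x\<in>configs V q. \<exists>v\<in>V. f v x = x v))"

(* The cycle C_{2n}: Inl i is v_i, Inr i is w_i (1 \<le> i \<le> n);
v_i ~ w_i, v_i ~ w_{i-1} (indices mod n), equivalently w_i ~ v_i, w_i ~ v_{i+1}.*)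

definition cycV :: "nat \<Rightarrow> (nat + nat) set" where
  "cycV n = Inl ` {1..n} \<union> Inr ` {1..n}"

definition cycN :: "nat \<Rightarrow> nat + nat \<Rightarrow> (nat + nat) set" where
  "cycN n u = (case u of
      Inl i \<Rightarrow> {Inr i, Inr (if i = 1 then n else i - 1)}
    | Inr i \<Rightarrow> {Inl i, Inl (if i = n then 1 else i + 1)})"

definition fguess :: "nat \<Rightarrow> (nat \<Rightarrow> int) \<Rightarrow> nat \<Rightarrow> int" where
  "fguess n y i =
     (if i = 1 then
        (if y 1 \<noteq> (y n - 1) mod 3 then (y 1 - 1) mod 3 else (y 1 + 1) mod 3)
      else
        (if y i \<noteq> (y (i - 1) + 1) mod 3 then (y i - 1) mod 3 else (y i + 1) mod 3))"

definition gguess :: "nat \<Rightarrow> (nat \<Rightarrow> int) \<Rightarrow> nat \<Rightarrow> int" where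
  "gguess n x i =
     (if i = n then
        (if x n \<noteq> x 1 then x n else (x n - 1) mod 3)
      else
        (if x i \<noteq> (x (i + 1) + 1) mod 3 then x i else (x i - 1) mod 3))"

definition bad :: "nat \<Rightarrow> (nat \<Rightarrow> int) \<Rightarrow> (nat \<Rightarrow> int) \<Rightarrow> bool" where
  "bad n x y \<longleftrightarrow> (\<forall>i\<in>{1..n}. fguess n y i \<noteq> x i \<and> gguess n x i \<noteq> y i)"

definition colouring :: "nat \<Rightarrow> (nat \<Rightarrow> int) \<Rightarrow> bool" where
  "colouring n x \<longleftrightarrow> (\<forall>i\<in>{1..n}. x i \<in> {0, 1, 2})"

end

theory Submission
  imports Defs
begin

lemma step:
  fixes a b c d :: int
  assumes "a \<in> {0,1,2}" "b \<in> {0,1,2}" "c \<in> {0,1,2}" "d \<in> {0,1,2}"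
   and "(if a \<noteq> (c+1) mod 3 then a else (a-1) mod 3) \<noteq> b"
   and "(if d \<noteq> (b+1) mod 3 then (d-1) mod 3 else (d+1) mod 3) \<noteq> c"
  shows "((b - a) mod 3 = 0 \<longrightarrow> (d - c) mod 3 = 0 \<and> c = (a-1) mod 3)
   \<and> ((b-a) mod 3 \<noteq> 1 \<longrightarrow> (d-c) mod 3 \<noteq> 1)
   \<and> ((b-a) mod 3 = 2 \<and> (d-c) mod 3 = 2 \<longrightarrow> c = a)
   \<and> ((b-a) mod 3 = 1 \<and> (d-c) mod 3 = 1 \<longrightarrow> c = (a+1) mod 3)"
  using assms by auto

lemma close:
  fixes a b c d :: int
  assumes "a \<in> {0,1,2}" "b \<in> {0,1,2}" "c \<in> {0,1,2}" "d \<in> {0,1,2}"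
   and "(if a \<noteq> c then a else (a-1) mod 3) \<noteq> b"
   and "(if d \<noteq> (b - 1) mod 3 then (d-1) mod 3 else (d+1) mod 3) \<noteq> c"
  shows "((b-a) mod 3 = 0 \<longrightarrow> c = a \<and> (d-c) mod 3 = 0)
   \<and> ((b-a) mod 3 = 2 \<longrightarrow> (d-c) mod 3 \<noteq> 1 \<and> ((d-c) mod 3 = 2 \<longrightarrow> c = (a+1) mod 3))
   \<and> ((b-a) mod 3 = 1 \<and> (d-c) mod 3 = 1 \<longrightarrow> c = (a-1) mod 3)"
  using assms by auto

lemma propag:
  assumes "\<And>m. 1 \<le> m \<Longrightarrow> m < n \<Longrightarrow> P m \<Longrightarrow> P (Suc m)" "1 \<le> i" "P i" "i \<le> j" "j \<le> n"
  shows "P j"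
  using assms(4,5)
proof (induction j rule: dec_induct)
  case base
  then show ?case using assms(3) by simp
next
  case (step m)
  then show ?case using assms(1,2) by auto
qed

lemma mod3_range: "(u::int) mod 3 \<in> {0,1,2}"
proof -
  have "0 \<le> u mod 3" "u mod 3 < 3" by auto
  then show ?thesis by auto
qed

lemma m1: assumes "(3::int) dvd (int n - 1)" shows "n mod 3 = 1"
proof -
  have a: "(int n - 1) mod 3 = 0" using assms by simp
  have "int n mod 3 = ((int n - 1) mod 3 + 1) mod 3" by (simp add: mod_add_left_eq)
  also have "\<dots> = 1" using a by simp
  finally have "int (n mod 3) = 1" by (simp add: of_nat_mod)
  then show ?thesis by simp
qed
lemma m2: assumes "(3::int) dvd (2 - int n)" shows "n mod 3 = 2"
proof -
  have "(3::int) dvd (int n - 2)" using assms by (metis dvd_minus_iff minus_diff_eq)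
  then have a: "(int n - 2) mod 3 = 0" by simp
  have "int n mod 3 = ((int n - 2) mod 3 + 2) mod 3" by (simp add: mod_add_left_eq)
  also have "\<dots> = 2" using a by simp
  finally have "int (n mod 3) = 2" by (simp add: of_nat_mod)
  then show ?thesis by simp
qed

context
  fixes n :: nat and x y :: "nat \<Rightarrow> int"
  assumes n1: "n > 1" and cx: "colouring n x" and cy: "colouring n y" and bd: "bad n x y"
begin

lemma xr: "1 \<le> i \<Longrightarrow> i \<le> n \<Longrightarrow> x i \<in> {0,1,2}" using cx by (auto simp: colouring_def)
lemma yr: "1 \<le> i \<Longrightarrow> i \<le> n \<Longrightarrow> y i \<in> {0,1,2}" using cy by (auto simp: colouring_def)

lemma st:
  assumes "1 \<le> i" "i < n"
  shows "((y i - x i) mod 3 = 0 \<longrightarrow> (y (Suc i) - x (Suc i)) mod 3 = 0 \<and> x (Suc i) = (x i - 1) mod 3)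
   \<and> ((y i - x i) mod 3 \<noteq> 1 \<longrightarrow> (y (Suc i) - x (Suc i)) mod 3 \<noteq> 1)
   \<and> ((y i - x i) mod 3 = 2 \<and> (y (Suc i) - x (Suc i)) mod 3 = 2 \<longrightarrow> x (Suc i) = x i)
   \<and> ((y i - x i) mod 3 = 1 \<and> (y (Suc i) - x (Suc i)) mod 3 = 1 \<longrightarrow> x (Suc i) = (x i + 1) mod 3)"
proof -
  have "gguess n x i \<noteq> y i" "fguess n y (Suc i) \<noteq> x (Suc i)" using bd assms by (auto simp: bad_def)
  hence g: "(if x i \<noteq> (x (Suc i)+1) mod 3 then x i else (x i - 1) mod 3) \<noteq> y i"
    and f: "(if y (Suc i) \<noteq> (y i +1) mod 3 then (y (Suc i) -1) mod 3 else (y (Suc i) + 1) mod 3) \<noteq> x (Suc i)"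
    using assms by (auto simp: gguess_def fguess_def)
  have r: "x i \<in> {0,1,2}" "y i \<in> {0,1,2}" "x (Suc i) \<in> {0,1,2}" "y (Suc i) \<in> {0,1,2}"
    using assms xr yr by auto
  show ?thesis by (rule step[OF r g f])
qed

lemma cl:
  "((y n - x n) mod 3 = 0 \<longrightarrow> x 1 = x n \<and> (y 1 - x 1) mod 3 = 0)
   \<and> ((y n - x n) mod 3 = 2 \<longrightarrow> (y 1 - x 1) mod 3 \<noteq> 1 \<and> ((y 1 - x 1) mod 3 = 2 \<longrightarrow> x 1 = (x n + 1) mod 3))
   \<and> ((y n - x n) mod 3 = 1 \<and> (y 1 - x 1) mod 3 = 1 \<longrightarrow> x 1 = (x n - 1) mod 3)"
proof -
  have "gguess n x n \<noteq> y n" "fguess n y 1 \<noteq> x 1" using bd n1 by (auto simp: bad_def)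
  hence g: "(if x n \<noteq> x 1 then x n else (x n - 1) mod 3) \<noteq> y n"
    and f: "(if y 1 \<noteq> (y n - 1) mod 3 then (y 1 - 1) mod 3 else (y 1 + 1) mod 3) \<noteq> x 1"
    using n1 by (auto simp: gguess_def fguess_def)
  have r: "x n \<in> {0,1,2}" "y n \<in> {0,1,2}" "x 1 \<in> {0,1,2}" "y 1 \<in> {0,1,2}"
    using n1 xr yr by auto
  show ?thesis by (rule close[OF r g f])
qed

lemma st0: assumes "1 \<le> i" "i < n" "(y i - x i) mod 3 = 0"
  shows "(y (Suc i) - x (Suc i)) mod 3 = 0 \<and> x (Suc i) = (x i - 1) mod 3"
  by (rule mp[OF conjunct1[OF st[OF assms(1,2)]] assms(3)])
lemma stn1: assumes "1 \<le> i" "i < n" "(y i - x i) mod 3 \<noteq> 1"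
  shows "(y (Suc i) - x (Suc i)) mod 3 \<noteq> 1"
  by (rule mp[OF conjunct1[OF conjunct2[OF st[OF assms(1,2)]]] assms(3)])
lemma st2: assumes "1 \<le> i" "i < n" "(y i - x i) mod 3 = 2" "(y (Suc i) - x (Suc i)) mod 3 = 2"
  shows "x (Suc i) = x i"
  by (rule mp[OF conjunct1[OF conjunct2[OF conjunct2[OF st[OF assms(1,2)]]]] conjI[OF assms(3,4)]])
lemma st1: assumes "1 \<le> i" "i < n" "(y i - x i) mod 3 = 1" "(y (Suc i) - x (Suc i)) mod 3 = 1"
  shows "x (Suc i) = (x i + 1) mod 3"
  by (rule mp[OF conjunct2[OF conjunct2[OF conjunct2[OF st[OF assms(1,2)]]]] conjI[OF assms(3,4)]])
lemma cl0: assumes "(y n - x n) mod 3 = 0" shows "x 1 = x n \<and> (y 1 - x 1) mod 3 = 0"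
  by (rule mp[OF conjunct1[OF cl] assms])
lemma cl2: assumes "(y n - x n) mod 3 = 2" shows "(y 1 - x 1) mod 3 \<noteq> 1"
  by (rule conjunct1[OF mp[OF conjunct1[OF conjunct2[OF cl]] assms]])
lemma cl22: assumes "(y n - x n) mod 3 = 2" "(y 1 - x 1) mod 3 = 2" shows "x 1 = (x n + 1) mod 3"
  by (rule mp[OF conjunct2[OF mp[OF conjunct1[OF conjunct2[OF cl]] assms(1)]] assms(2)])
lemma cl1: assumes "(y n - x n) mod 3 = 1" "(y 1 - x 1) mod 3 = 1" shows "x 1 = (x n - 1) mod 3"
  by (rule mp[OF conjunct2[OF conjunct2[OF cl]] conjI[OF assms]])

lemma bad_imp:
  "(n mod 3 = 1 \<and> (\<exists>a\<in>{0::int,1,2}. \<forall>i\<in>{1..n}. x i = (a - (int i - 1)) mod 3 \<and> y i = (a - (int i - 1)) mod 3))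
 \<or> (n mod 3 = 2 \<and> (\<exists>a\<in>{0::int,1,2}. \<forall>i\<in>{1..n}. y i = (a + (int i - 1)) mod 3 \<and> x i = (a + (int i - 2)) mod 3))"
proof -
  have n1': "1 \<le> n" using n1 by simp
  have x1: "x 1 \<in> {0,1,2}" by (rule xr[OF order_refl n1'])
  have nonone: "(y j - x j) mod 3 \<noteq> 1" if "1 \<le> i" "i \<le> j" "j \<le> n" "(y i - x i) mod 3 \<noteq> 1" for i j
    by (rule propag[where P="\<lambda>j. (y j - x j) mod 3 \<noteq> 1", OF stn1 that(1,4,2,3)])
  have zero: "(y j - x j) mod 3 = 0" if "1 \<le> i" "i \<le> j" "j \<le> n" "(y i - x i) mod 3 = 0" for i j
  proof (rule propag[where P="\<lambda>j. (y j - x j) mod 3 = 0", OF _ that(1,4,2,3)])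
    fix m assume "1 \<le> m" "m < n" "(y m - x m) mod 3 = 0"
    from st0[OF this] show "(y (Suc m) - x (Suc m)) mod 3 = 0" by (rule conjunct1)
  qed
  have "(y 1 - x 1) mod 3 \<in> {0,1,2}" by (rule mod3_range)
  then consider (c0) "(y 1 - x 1) mod 3 = 0" | (c1) "(y 1 - x 1) mod 3 = 1" | (c2) "(y 1 - x 1) mod 3 = 2" by blast
  then show ?thesis
  proof cases
    case c0
    have all: "(y j - x j) mod 3 = 0 \<and> x j = (x 1 - (int j - 1)) mod 3" if "1 \<le> j" "j \<le> n" for j
    proof (rule propag[where P="\<lambda>j. (y j - x j) mod 3 = 0 \<and> x j = (x 1 - (int j - 1)) mod 3" and i=1, OF _ order_refl _ that(1,2)])
      fix m assume m: "1 \<le> m" "m < n" "(y m - x m) mod 3 = 0 \<and> x m = (x 1 - (int m - 1)) mod 3"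
      from st0[OF m(1,2) conjunct1[OF m(3)]]
      have a: "(y (Suc m) - x (Suc m)) mod 3 = 0" and b: "x (Suc m) = (x m - 1) mod 3" by blast+
      have "x (Suc m) = ((x 1 - (int m - 1)) mod 3 - 1) mod 3" using b m(3) by simp
      also have "\<dots> = (x 1 - (int (Suc m) - 1)) mod 3" by (simp add: mod_diff_left_eq algebra_simps)
      finally show "(y (Suc m) - x (Suc m)) mod 3 = 0 \<and> x (Suc m) = (x 1 - (int (Suc m) - 1)) mod 3"
        using a by blast
    next
      show "(y 1 - x 1) mod 3 = 0 \<and> x 1 = (x 1 - (int 1 - 1)) mod 3" using c0 x1 by auto
    qed
    have xn: "x n = (x 1 - (int n - 1)) mod 3" and dn: "(y n - x n) mod 3 = 0" using all[OF n1' order_refl] by blast+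
    have "x 1 = x n" using cl0[OF dn] by blast
    with xn have e: "x 1 = (x 1 - (int n - 1)) mod 3" by simp
    have "n mod 3 = 1"
    proof -
      have "x 1 mod 3 = (x 1 - (int n - 1)) mod 3" using e by (metis mod_mod_trivial)
      then have "(3::int) dvd (x 1 - (x 1 - (int n - 1)))" by (simp only: mod_eq_dvd_iff)
      then have "(3::int) dvd (int n - 1)" by simp
      then show ?thesis by (rule m1)
    qed
    moreover have "\<forall>i\<in>{1..n}. x i = (x 1 - (int i - 1)) mod 3 \<and> y i = (x 1 - (int i - 1)) mod 3"
    proof
      fix i assume i: "i \<in> {1..n}"
      then have i1: "1 \<le> i" and i2: "i \<le> n" by auto
      have d: "(y i - x i) mod 3 = 0" and xi: "x i = (x 1 - (int i - 1)) mod 3" using all[OF i1 i2] by blast+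
      have "y i = x i" using d xr[OF i1 i2] yr[OF i1 i2] by auto
      then show "x i = (x 1 - (int i - 1)) mod 3 \<and> y i = (x 1 - (int i - 1)) mod 3" using xi by simp
    qed
    ultimately show ?thesis using x1 by blast
  next
    case c1
    have "(y n - x n) mod 3 \<in> {0,1,2}" by (rule mod3_range)
    moreover have "(y n - x n) mod 3 \<noteq> 0" using cl0 c1 by auto
    moreover have "(y n - x n) mod 3 \<noteq> 2" using cl2 c1 by auto
    ultimately have dn: "(y n - x n) mod 3 = 1" by blast
    have all1: "(y j - x j) mod 3 = 1" if "1 \<le> j" "j \<le> n" for j
      using nonone[OF that(1) that(2) order_refl] dn by blast
    have all: "x j = (x 1 + (int j - 1)) mod 3" if "1 \<le> j" "j \<le> n" for j
    proof (rule propag[where P="\<lambda>j. x j = (x 1 + (int j - 1)) mod 3" and i=1, OF _ order_refl _ that(1,2)])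
      fix m assume m: "1 \<le> m" "m < n" "x m = (x 1 + (int m - 1)) mod 3"
      have b: "x (Suc m) = (x m + 1) mod 3"
        by (rule st1[OF m(1,2) all1[OF m(1)] all1]) (use m in auto)
      have "x (Suc m) = ((x 1 + (int m - 1)) mod 3 + 1) mod 3" using b m(3) by simp
      also have "\<dots> = (x 1 + (int (Suc m) - 1)) mod 3" by (simp add: mod_add_right_eq algebra_simps)
      finally show "x (Suc m) = (x 1 + (int (Suc m) - 1)) mod 3" .
    next
      show "x 1 = (x 1 + (int 1 - 1)) mod 3" using x1 by auto
    qed
    have e: "x 1 = (x n - 1) mod 3" by (rule cl1[OF dn c1])
    have nm: "n mod 3 = 2"
    proof -
      have "x 1 mod 3 = (x n - 1) mod 3" using e by (metis mod_mod_trivial)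
      also have "\<dots> = ((x 1 + (int n - 1)) mod 3 - 1) mod 3" using all[OF n1' order_refl] by simp
      also have "\<dots> = (x 1 + (int n - 1) - 1) mod 3" by (rule mod_diff_left_eq)
      finally have "(3::int) dvd (x 1 - (x 1 + (int n - 1) - 1))" by (simp only: mod_eq_dvd_iff)
      moreover have "x 1 - (x 1 + (int n - 1) - 1) = 2 - int n" by simp
      ultimately have "(3::int) dvd (2 - int n)" by simp
      then show ?thesis by (rule m2)
    qed
    have P: "\<forall>i\<in>{1..n}. y i = ((x 1 + 1) mod 3 + (int i - 1)) mod 3 \<and> x i = ((x 1 + 1) mod 3 + (int i - 2)) mod 3"
    proof
      fix i assume i: "i \<in> {1..n}"
      then have i1: "1 \<le> i" and i2: "i \<le> n" by auto
      have d: "(y i - x i) mod 3 = 1" and xi: "x i = (x 1 + (int i - 1)) mod 3" using all1[OF i1 i2] all[OF i1 i2] by blast+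
      have yi: "y i = (x i + 1) mod 3" using d xr[OF i1 i2] yr[OF i1 i2] by auto
      have "y i = ((x 1 + (int i - 1)) mod 3 + 1) mod 3" using yi xi by simp
      also have "\<dots> = (x 1 + (int i - 1) + 1) mod 3" by (rule mod_add_left_eq)
      also have "\<dots> = (x 1 + 1 + (int i - 1)) mod 3" by (simp add: algebra_simps)
      also have "\<dots> = ((x 1 + 1) mod 3 + (int i - 1)) mod 3" by (rule mod_add_left_eq[symmetric])
      finally have A: "y i = ((x 1 + 1) mod 3 + (int i - 1)) mod 3" .
      have "((x 1 + 1) mod 3 + (int i - 2)) mod 3 = (x 1 + 1 + (int i - 2)) mod 3" by (rule mod_add_left_eq)
      also have "\<dots> = (x 1 + (int i - 1)) mod 3" by (simp add: algebra_simps)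
      finally have "x i = ((x 1 + 1) mod 3 + (int i - 2)) mod 3" using xi by simp
      with A show "y i = ((x 1 + 1) mod 3 + (int i - 1)) mod 3 \<and> x i = ((x 1 + 1) mod 3 + (int i - 2)) mod 3" by blast
    qed
    have mem: "(x 1 + 1) mod 3 \<in> {0,1,2}" by (rule mod3_range)
    show ?thesis
    proof (rule disjI2, rule conjI)
      show "n mod 3 = 2" by (rule nm)
      show "\<exists>a\<in>{0::int,1,2}. \<forall>i\<in>{1..n}. y i = (a + (int i - 1)) mod 3 \<and> x i = (a + (int i - 2)) mod 3"
        by (rule bexI[where x="(x 1 + 1) mod 3"]) (rule P, rule mem)
    qed
  next
    case c2
    have "(y n - x n) mod 3 \<noteq> 1" using nonone[OF order_refl n1' order_refl] c2 by simp
    moreover have "(y n - x n) mod 3 \<noteq> 0" using cl0 c2 by auto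
    moreover have "(y n - x n) mod 3 \<in> {0,1,2}" by (rule mod3_range)
    ultimately have dn: "(y n - x n) mod 3 = 2" by blast
    have all2: "(y j - x j) mod 3 = 2" if "1 \<le> j" "j \<le> n" for j
    proof -
      have "(y j - x j) mod 3 \<noteq> 1" using nonone[OF order_refl that(1) that(2)] c2 by simp
      moreover have "(y j - x j) mod 3 \<noteq> 0" using zero[OF that(1) that(2) order_refl] dn by auto
      moreover have "(y j - x j) mod 3 \<in> {0,1,2}" by (rule mod3_range)
      ultimately show ?thesis by blast
    qed
    have all: "x j = x 1" if "1 \<le> j" "j \<le> n" for j
    proof (rule propag[where P="\<lambda>j. x j = x 1" and i=1, OF _ order_refl _ that(1,2)])
      fix m assume m: "1 \<le> m" "m < n" "x m = x 1"
      have "x (Suc m) = x m"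
        by (rule st2[OF m(1,2) all2[OF m(1)] all2]) (use m in auto)
      then show "x (Suc m) = x 1" using m(3) by simp
    qed simp
    have "x 1 = (x n + 1) mod 3" by (rule cl22[OF dn c2])
    then have "x 1 = (x 1 + 1) mod 3" using all[OF n1' order_refl] by simp
    then have False using x1 by auto
    then show ?thesis ..
  qed
qed

end

lemma finb1: "(c::int) \<in> {0,1,2} \<Longrightarrow> (if c \<noteq> (c - 1) mod 3 then (c - 1) mod 3 else (c + 1) mod 3) \<noteq> c" by auto
lemma finb2: "(c::int) \<in> {0,1,2} \<Longrightarrow> (if c \<noteq> ((c + 1) mod 3 + 1) mod 3 then (c - 1) mod 3 else (c + 1) mod 3) \<noteq> c" by auto
lemma finb3: "(c::int) \<in> {0,1,2} \<Longrightarrow> (if c \<noteq> c then c else (c - 1) mod 3) \<noteq> c" by auto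
lemma finb4: "(c::int) \<in> {0,1,2} \<Longrightarrow> (if c \<noteq> ((c - 1) mod 3 + 1) mod 3 then c else (c - 1) mod 3) \<noteq> c" by auto
lemma finc1: "(a::int) \<in> {0,1,2} \<Longrightarrow> (if a \<noteq> ((a + 1) mod 3 - 1) mod 3 then (a - 1) mod 3 else (a + 1) mod 3) \<noteq> (a - 1) mod 3" by auto
lemma finc2: "(c::int) \<in> {0,1,2} \<Longrightarrow> (if c \<noteq> ((c - 1) mod 3 + 1) mod 3 then (c - 1) mod 3 else (c + 1) mod 3) \<noteq> (c - 1) mod 3" by auto
lemma finc3: "(a::int) \<in> {0,1,2} \<Longrightarrow> (if a \<noteq> (a - 1) mod 3 then a else (a - 1) mod 3) \<noteq> (a + 1) mod 3" by auto
lemma finc4: "(c::int) \<in> {0,1,2} \<Longrightarrow> (if (c - 1) mod 3 \<noteq> (c + 1) mod 3 then (c - 1) mod 3 else ((c - 1) mod 3 - 1) mod 3) \<noteq> c" by auto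

lemma intmod: assumes "n mod 3 = k" shows "int n mod 3 = int k"
proof -
  have "int (n mod 3) = int n mod 3" by (simp add: of_nat_mod)
  then show ?thesis using assms by simp
qed

lemma fg_f1: "n > 1 \<Longrightarrow> fguess n y 1 = (if y 1 \<noteq> (y n - 1) mod 3 then (y 1 - 1) mod 3 else (y 1 + 1) mod 3)"
  by (simp add: fguess_def)
lemma fg_f: "i \<noteq> 1 \<Longrightarrow> fguess n y i = (if y i \<noteq> (y (i - 1) + 1) mod 3 then (y i - 1) mod 3 else (y i + 1) mod 3)"
  by (simp add: fguess_def)
lemma fg_gn: "gguess n x n = (if x n \<noteq> x 1 then x n else (x n - 1) mod 3)"
  by (simp add: gguess_def)
lemma fg_g: "i \<noteq> n \<Longrightarrow> gguess n x i = (if x i \<noteq> (x (i + 1) + 1) mod 3 then x i else (x i - 1) mod 3)"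
  by (simp add: gguess_def)

lemma pat_b_bad:
  assumes n1: "n > 1" and nm: "n mod 3 = 1" and a: "a \<in> {0::int,1,2}"
    and P: "\<forall>i\<in>{1..n}. x i = (a - (int i - 1)) mod 3 \<and> y i = (a - (int i - 1)) mod 3"
  shows "bad n x y"
  unfolding bad_def
proof
  fix i assume i: "i \<in> {1..n}"
  define c where "c = (a - (int i - 1)) mod 3"
  have c: "c \<in> {0,1,2}" unfolding c_def by (rule mod3_range)
  have xi: "x i = c" and yi: "y i = c" using P i unfolding c_def by auto
  have am: "a mod 3 = a" using a by auto
  have x1: "x 1 = a" and y1: "y 1 = a" using P n1 am by auto
  have nn: "int n mod 3 = 1" using intmod[OF nm] by simp
  have "(a - (int n - 1)) mod 3 = (a + 1 - int n) mod 3" by (simp add: algebra_simps)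
  also have "\<dots> = (a + 1 - int n mod 3) mod 3" by (rule mod_diff_right_eq[symmetric])
  also have "\<dots> = a" using nn am by simp
  finally have an: "(a - (int n - 1)) mod 3 = a" .
  have xn: "x n = a" and yn: "y n = a" using P n1 an by auto
  show "fguess n y i \<noteq> x i \<and> gguess n x i \<noteq> y i"
  proof
    show "fguess n y i \<noteq> x i"
    proof (cases "i = 1")
      case True
      have "fguess n y i = (if a \<noteq> (a - 1) mod 3 then (a - 1) mod 3 else (a + 1) mod 3)"
        using True fg_f1[OF n1, of y] y1 yn by simp
      then show ?thesis using finb1[OF a] True x1 by simp
    next
      case False
      have e: "a - (int (i - 1) - 1) = (a - (int i - 1)) + 1" using i by simp
      have im: "i - 1 \<in> {1..n}" using i False by auto
      have "y (i - 1) = (a - (int (i - 1) - 1)) mod 3" using bspec[OF P im] by (rule conjunct2)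
      also have "\<dots> = ((a - (int i - 1)) + 1) mod 3" by (simp only: e)
      also have "\<dots> = (c + 1) mod 3" unfolding c_def by (rule mod_add_left_eq[symmetric])
      finally have yp: "y (i - 1) = (c + 1) mod 3" .
      have "fguess n y i = (if c \<noteq> ((c + 1) mod 3 + 1) mod 3 then (c - 1) mod 3 else (c + 1) mod 3)"
        using fg_f[OF False, of n y] yp yi by simp
      then show ?thesis using finb2[OF c] xi by simp
    qed
  next
    show "gguess n x i \<noteq> y i"
    proof (cases "i = n")
      case True
      have "gguess n x i = (if a \<noteq> a then a else (a - 1) mod 3)"
        using True fg_gn[of n x] x1 xn by simp
      then show ?thesis using finb3[OF a] True yn by simp
    next
      case False
      have "x (i + 1) = ((a - (int i - 1)) - 1) mod 3" using P i False by (auto simp: algebra_simps)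
      also have "\<dots> = (c - 1) mod 3" unfolding c_def by (rule mod_diff_left_eq[symmetric])
      finally have xp: "x (i + 1) = (c - 1) mod 3" .
      have "gguess n x i = (if c \<noteq> ((c - 1) mod 3 + 1) mod 3 then c else (c - 1) mod 3)"
        using fg_g[OF False, of x] xp xi by simp
      then show ?thesis using finb4[OF c] yi by simp
    qed
  qed
qed

lemma pat_c_bad:
  assumes n1: "n > 1" and nm: "n mod 3 = 2" and a: "a \<in> {0::int,1,2}"
    and P: "\<forall>i\<in>{1..n}. y i = (a + (int i - 1)) mod 3 \<and> x i = (a + (int i - 2)) mod 3"
  shows "bad n x y"
  unfolding bad_def
proof
  fix i assume i: "i \<in> {1..n}"
  define c where "c = (a + (int i - 1)) mod 3"
  have c: "c \<in> {0,1,2}" unfolding c_def by (rule mod3_range)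
  have yi: "y i = c" using P i unfolding c_def by auto
  have "x i = ((a + (int i - 1)) - 1) mod 3" using P i by (auto simp: algebra_simps)
  also have "\<dots> = (c - 1) mod 3" unfolding c_def by (rule mod_diff_left_eq[symmetric])
  finally have xi: "x i = (c - 1) mod 3" .
  have am: "a mod 3 = a" using a by auto
  have y1: "y 1 = a" using P n1 am by auto
  have x1: "x 1 = (a - 1) mod 3" using P n1 by (auto simp: algebra_simps)
  have nn: "int n mod 3 = 2" using intmod[OF nm] by simp
  have "(a + (int n - 1)) mod 3 = (a - 1 + int n) mod 3" by (simp add: algebra_simps)
  also have "\<dots> = (a - 1 + int n mod 3) mod 3" by (rule mod_add_right_eq[symmetric])
  also have "\<dots> = (a + 1) mod 3" using nn by (simp add: algebra_simps)
  finally have an: "(a + (int n - 1)) mod 3 = (a + 1) mod 3" .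
  have "(a + (int n - 2)) mod 3 = (a - 2 + int n) mod 3" by (simp add: algebra_simps)
  also have "\<dots> = (a - 2 + int n mod 3) mod 3" by (rule mod_add_right_eq[symmetric])
  also have "\<dots> = a" using nn am by simp
  finally have an2: "(a + (int n - 2)) mod 3 = a" .
  have yn: "y n = (a + 1) mod 3" and xn: "x n = a" using P n1 an an2 by auto
  show "fguess n y i \<noteq> x i \<and> gguess n x i \<noteq> y i"
  proof
    show "fguess n y i \<noteq> x i"
    proof (cases "i = 1")
      case True
      have "fguess n y i = (if a \<noteq> ((a + 1) mod 3 - 1) mod 3 then (a - 1) mod 3 else (a + 1) mod 3)"
        using True fg_f1[OF n1, of y] y1 yn by simp
      then show ?thesis using finc1[OF a] True x1 by simp
    next
      case False
      have e: "a + (int (i - 1) - 1) = (a + (int i - 1)) - 1" using i by simp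
      have im: "i - 1 \<in> {1..n}" using i False by auto
      have "y (i - 1) = (a + (int (i - 1) - 1)) mod 3" using bspec[OF P im] by (rule conjunct1)
      also have "\<dots> = ((a + (int i - 1)) - 1) mod 3" by (simp only: e)
      also have "\<dots> = (c - 1) mod 3" unfolding c_def by (rule mod_diff_left_eq[symmetric])
      finally have yp: "y (i - 1) = (c - 1) mod 3" .
      have "fguess n y i = (if c \<noteq> ((c - 1) mod 3 + 1) mod 3 then (c - 1) mod 3 else (c + 1) mod 3)"
        using fg_f[OF False, of n y] yp yi by simp
      then show ?thesis using finc2[OF c] xi by simp
    qed
  next
    show "gguess n x i \<noteq> y i"
    proof (cases "i = n")
      case True
      have "gguess n x i = (if a \<noteq> (a - 1) mod 3 then a else (a - 1) mod 3)"
        using True fg_gn[of n x] x1 xn by simp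
      then show ?thesis using finc3[OF a] True yn by simp
    next
      case False
      have "x (i + 1) = (a + (int i - 1)) mod 3" using P i False by (auto simp: algebra_simps)
      then have xp: "x (i + 1) = c" unfolding c_def .
      have "gguess n x i = (if (c - 1) mod 3 \<noteq> (c + 1) mod 3 then (c - 1) mod 3 else ((c - 1) mod 3 - 1) mod 3)"
        using fg_g[OF False, of x] xp xi by simp
      then show ?thesis using finc4[OF c] yi by simp
    qed
  qed
qed


lemma g_bound: "0 \<le> x i \<Longrightarrow> x i < 3 \<Longrightarrow> 0 \<le> x n \<Longrightarrow> x n < 3 \<Longrightarrow> 0 \<le> gguess n x i \<and> gguess n x i < 3"
  by (simp add: gguess_def)
lemma f_bound: "0 \<le> fguess n y i \<and> fguess n y i < 3"
  by (simp add: fguess_def)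

lemma solv:
  assumes n1: "n > 1" and nb: "\<forall>x y. colouring n x \<and> colouring n y \<longrightarrow> \<not> bad n x y"
  shows "q_solvable (cycV n) (cycN n) 3"
proof -
  define F where "F = (\<lambda>v (c::nat+nat \<Rightarrow> nat). case v of
      Inl i \<Rightarrow> nat (fguess n (\<lambda>j. int (c (Inr j))) i)
    | Inr i \<Rightarrow> nat (gguess n (\<lambda>j. int (c (Inl j))) i))"
  have rng: "c (Inl j) < 3 \<and> c (Inr j) < 3" if "c \<in> configs (cycV n) 3" "j \<in> {1..n}" for c j
    using that unfolding configs_def cycV_def by (auto simp: PiE_iff)
  have D: "is_D_function (cycV n) (cycN n) 3 F"
    unfolding is_D_function_def
  proof (intro conjI ballI impI)
    fix v c assume v: "v \<in> cycV n" and c: "c \<in> configs (cycV n) 3"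
    show "F v c < 3"
    proof (cases v)
      case (Inl i)
      have "0 \<le> fguess n (\<lambda>j. int (c (Inr j))) i \<and> fguess n (\<lambda>j. int (c (Inr j))) i < 3" by (rule f_bound)
      then show ?thesis using Inl unfolding F_def by auto
    next
      case (Inr i)
      have i: "i \<in> {1..n}" using v Inr unfolding cycV_def by auto
      have nn: "n \<in> {1..n}" using n1 by auto
      have "0 \<le> gguess n (\<lambda>j. int (c (Inl j))) i \<and> gguess n (\<lambda>j. int (c (Inl j))) i < 3"
        by (rule g_bound) (use rng[OF c i] rng[OF c nn] in auto)
      then show ?thesis using Inr unfolding F_def by auto
    qed
  next
    fix v c c' assume v: "v \<in> cycV n" and c: "c \<in> configs (cycV n) 3" and c': "c' \<in> configs (cycV n) 3"
      and ag: "\<forall>u\<in>cycN n v. c u = c' u"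
    show "F v c = F v c'"
    proof (cases v)
      case (Inl i)
      have e1: "c (Inr i) = c' (Inr i)" and e2: "c (Inr (if i = 1 then n else i - 1)) = c' (Inr (if i = 1 then n else i - 1))"
        using ag Inl unfolding cycN_def by auto
      show ?thesis
      proof (cases "i = 1")
        case True
        then show ?thesis using Inl e1 e2 unfolding F_def fguess_def by simp
      next
        case False
        then show ?thesis using Inl e1 e2 unfolding F_def fguess_def by simp
      qed
    next
      case (Inr i)
      have e1: "c (Inl i) = c' (Inl i)" and e2: "c (Inl (if i = n then 1 else i + 1)) = c' (Inl (if i = n then 1 else i + 1))"
        using ag Inr unfolding cycN_def by auto
      show ?thesis
      proof (cases "i = n")
        case True
        then show ?thesis using Inr e1 e2 unfolding F_def gguess_def by simp
      next
        case False
        then show ?thesis using Inr e1 e2 unfolding F_def gguess_def by simp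
      qed
    qed
  qed
  have "\<exists>v\<in>cycV n. F v c = c v" if c: "c \<in> configs (cycV n) 3" for c
  proof -
    define x where "x = (\<lambda>j. int (c (Inl j)))"
    define y where "y = (\<lambda>j. int (c (Inr j)))"
    have cx: "colouring n x" unfolding colouring_def x_def
    proof
      fix j assume "j \<in> {1..n}"
      then have "c (Inl j) < 3" using rng[OF c] by blast
      then show "int (c (Inl j)) \<in> {0,1,2}" by auto
    qed
    have cy: "colouring n y" unfolding colouring_def y_def
    proof
      fix j assume "j \<in> {1..n}"
      then have "c (Inr j) < 3" using rng[OF c] by blast
      then show "int (c (Inr j)) \<in> {0,1,2}" by auto
    qed
    have "\<not> bad n x y" using nb cx cy by blast
    then obtain i where i: "i \<in> {1..n}" and h: "fguess n y i = x i \<or> gguess n x i = y i"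
      unfolding bad_def by blast
    show ?thesis
    proof (cases "fguess n y i = x i")
      case True
      have "F (Inl i) c = c (Inl i)" using True unfolding F_def x_def y_def by simp
      moreover have "Inl i \<in> cycV n" using i unfolding cycV_def by auto
      ultimately show ?thesis by blast
    next
      case False
      then have "gguess n x i = y i" using h by blast
      then have "F (Inr i) c = c (Inr i)" unfolding F_def x_def y_def by simp
      moreover have "Inr i \<in> cycV n" using i unfolding cycV_def by auto
      ultimately show ?thesis by blast
    qed
  qed
  then show ?thesis unfolding q_solvable_def using D by blast
qed

theorem theorem16:
  fixes n :: nat
  assumes "n > 1"
  shows "(n mod 3 = 0 \<longrightarrow>
            (\<forall>x y. colouring n x \<and> colouring n y \<longrightarrow> \<not> bad n x y) \<and>
            q_solvable (cycV n) (cycN n) 3)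
       \<and> (n mod 3 = 1 \<longrightarrow>
            (\<forall>x y. colouring n x \<and> colouring n y \<longrightarrow>
               (bad n x y \<longleftrightarrow> (\<exists>a\<in>{0::int, 1, 2}. \<forall>i\<in>{1..n}.
                   x i = (a - (int i - 1)) mod 3 \<and> y i = (a - (int i - 1)) mod 3))))
       \<and> (n mod 3 = 2 \<longrightarrow>
            (\<forall>x y. colouring n x \<and> colouring n y \<longrightarrow>
               (bad n x y \<longleftrightarrow> (\<exists>a\<in>{0::int, 1, 2}. \<forall>i\<in>{1..n}.
                   y i = (a + (int i - 1)) mod 3 \<and> x i = (a + (int i - 2)) mod 3))))"
proof (intro conjI)
  show "n mod 3 = 0 \<longrightarrow> (\<forall>x y. colouring n x \<and> colouring n y \<longrightarrow> \<not> bad n x y) \<and> q_solvable (cycV n) (cycN n) 3"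
  proof
    assume m: "n mod 3 = 0"
    have nb: "\<forall>x y. colouring n x \<and> colouring n y \<longrightarrow> \<not> bad n x y"
    proof (intro allI impI notI)
      fix x y assume "colouring n x \<and> colouring n y" "bad n x y"
      then have "n mod 3 = 1 \<or> n mod 3 = 2" using bad_imp[OF assms] by blast
      then show False using m by simp
    qed
    show "(\<forall>x y. colouring n x \<and> colouring n y \<longrightarrow> \<not> bad n x y) \<and> q_solvable (cycV n) (cycN n) 3"
      using nb solv[OF assms nb] by blast
  qed
next
  show "n mod 3 = 1 \<longrightarrow>
            (\<forall>x y. colouring n x \<and> colouring n y \<longrightarrow>
               (bad n x y \<longleftrightarrow> (\<exists>a\<in>{0::int, 1, 2}. \<forall>i\<in>{1..n}.
                   x i = (a - (int i - 1)) mod 3 \<and> y i = (a - (int i - 1)) mod 3)))"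
  proof (intro impI allI)
  fix x y assume m: "n mod 3 = 1" and c: "colouring n x \<and> colouring n y"
  show "bad n x y \<longleftrightarrow> (\<exists>a\<in>{0::int, 1, 2}. \<forall>i\<in>{1..n}.
                   x i = (a - (int i - 1)) mod 3 \<and> y i = (a - (int i - 1)) mod 3)"
  proof
    assume "bad n x y"
    then show "\<exists>a\<in>{0::int, 1, 2}. \<forall>i\<in>{1..n}. x i = (a - (int i - 1)) mod 3 \<and> y i = (a - (int i - 1)) mod 3"
      using bad_imp[OF assms conjunct1[OF c] conjunct2[OF c]] m by auto
  next
    assume "\<exists>a\<in>{0::int, 1, 2}. \<forall>i\<in>{1..n}. x i = (a - (int i - 1)) mod 3 \<and> y i = (a - (int i - 1)) mod 3"
    then obtain a where "a \<in> {0::int,1,2}" "\<forall>i\<in>{1..n}. x i = (a - (int i - 1)) mod 3 \<and> y i = (a - (int i - 1)) mod 3"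
      by blast
    then show "bad n x y" by (rule pat_b_bad[OF assms m])
  qed
  qed
next
  show "n mod 3 = 2 \<longrightarrow>
            (\<forall>x y. colouring n x \<and> colouring n y \<longrightarrow>
               (bad n x y \<longleftrightarrow> (\<exists>a\<in>{0::int, 1, 2}. \<forall>i\<in>{1..n}.
                   y i = (a + (int i - 1)) mod 3 \<and> x i = (a + (int i - 2)) mod 3)))"
  proof (intro impI allI)
  fix x y assume m: "n mod 3 = 2" and c: "colouring n x \<and> colouring n y"
  show "bad n x y \<longleftrightarrow> (\<exists>a\<in>{0::int, 1, 2}. \<forall>i\<in>{1..n}.
                   y i = (a + (int i - 1)) mod 3 \<and> x i = (a + (int i - 2)) mod 3)"
  proof
    assume "bad n x y"
    then show "\<exists>a\<in>{0::int, 1, 2}. \<forall>i\<in>{1..n}. y i = (a + (int i - 1)) mod 3 \<and> x i = (a + (int i - 2)) mod 3"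
      using bad_imp[OF assms conjunct1[OF c] conjunct2[OF c]] m by auto
  next
    assume "\<exists>a\<in>{0::int, 1, 2}. \<forall>i\<in>{1..n}. y i = (a + (int i - 1)) mod 3 \<and> x i = (a + (int i - 2)) mod 3"
    then obtain a where "a \<in> {0::int,1,2}" "\<forall>i\<in>{1..n}. y i = (a + (int i - 1)) mod 3 \<and> x i = (a + (int i - 2)) mod 3"
      by blast
    then show "bad n x y" by (rule pat_c_bad[OF assms m])
  qed
  qed
qed

end
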